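(* Fix an integer $k\geq 2$. For each $n\geq 1$ there exist a set $X_n$ with $|X_n|=n$ and a function $f_n:X_n\to X_n$ such that, as $n\to\infty$, \[\deg(f_n)=k+1+o(1)\quad\text{and}\quad\deg(f_n^k)=n^{1-1/2^{k-1}}(1+o(1)),\] where $f_n^k$ denotes the $k$-fold iterate of $f_n$.
   Context: For finite sets $X,Y$ and a function $f:X\to Y$, the degree of $f$ is $\deg(f)=\frac{1}{|X|}\sum_{y\in Y}|f^{-1}(y)|^2$. *)

theory Defs
  imports "HOL-Analysis.Analysis"
begin

definition fdeg :: "'a set \<Rightarrow> 'b set \<Rightarrow> ('a \<Rightarrow> 'b) \<Rightarrow> real" where
  "fdeg X Y f = (\<Sum>y\<in>Y. real (card {x\<in>X. f x = y}) ^ 2) / real (card X)"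

end

theory Submission imports Defs begin

definition aa :: "nat \<Rightarrow> nat \<Rightarrow> nat \<Rightarrow> nat" where "aa k t j = t ^ (2^k - 2^(k-j))"
definition bb :: "nat \<Rightarrow> nat \<Rightarrow> nat \<Rightarrow> nat" where "bb k t j = t ^ (2^(k-j))"
definition SS :: "nat \<Rightarrow> nat \<Rightarrow> nat \<Rightarrow> nat" where "SS k t j = (\<Sum>i<j. aa k t i)"
definition TT :: "nat \<Rightarrow> nat \<Rightarrow> nat" where "TT k t = SS k t (Suc k)"
definition lev :: "nat \<Rightarrow> nat \<Rightarrow> nat \<Rightarrow> nat" where "lev k t x = Max {j. j \<le> k \<and> SS k t j \<le> x}"
definition FF :: "nat \<Rightarrow> nat \<Rightarrow> nat \<Rightarrow> nat" where
  "FF k t x = (if x < TT k t then SS k t (lev k t x - 1) + (x - SS k t (lev k t x)) div bb k t (lev k t x) else x)"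

lemma arith_aux: "(k::nat) \<ge> 1 \<Longrightarrow> (b+1)^2 + (k-1)*(b^2) = k*b^2 + 2*b + 1"
proof -
  assume "k \<ge> 1"
  then obtain m where m: "k = Suc m" by (cases k) auto
  have "(b+1)^2 = b^2 + 2*b + (1::nat)" by (simp add: power2_eq_square algebra_simps)
  then show ?thesis using m by simp
qed

context fixes k t :: nat assumes k2: "k \<ge> 2" and t1: "t \<ge> 1"
begin

lemma aa_pos: "aa k t j \<ge> 1" using t1 by (simp add: aa_def)
lemma bb_pos: "bb k t j \<ge> 1" using t1 by (simp add: bb_def)
lemma SS_Suc: "SS k t (Suc j) = SS k t j + aa k t j" by (simp add: SS_def)
lemma SS_0[simp]: "SS k t 0 = 0" by (simp add: SS_def)
lemma SS_1[simp]: "SS k t (Suc 0) = 1" by (simp add: SS_def aa_def)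
lemma SS_strict: "i < j \<Longrightarrow> SS k t i < SS k t j"
proof (induction j)
  case 0 then show ?case by simp
next
  case (Suc j) then show ?case using aa_pos[of j] SS_Suc[of j] by (cases "i = j") auto
qed
lemma SS_mono: "i \<le> j \<Longrightarrow> SS k t i \<le> SS k t j"
  using SS_strict by (cases "i = j") (auto simp: order_le_less)

lemma aa_Suc: "j < k \<Longrightarrow> aa k t (Suc j) = aa k t j * bb k t (Suc j)"
proof -
  assume j: "j < k"
  have e: "(2::nat)^(k-j) = 2 * 2^(k - Suc j)" using j
    by (metis Suc_diff_Suc power_Suc)
  have le: "(2::nat)^(k-j) \<le> 2^k" by (simp add: power_increasing)
  have e2: "(2::nat)^k - 2^(k - Suc j) = (2^k - 2^(k-j)) + 2^(k - Suc j)" using e le by simp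
  show ?thesis unfolding aa_def bb_def e2 by (rule power_add)
qed

lemma lev_eq: "j \<le> k \<Longrightarrow> SS k t j \<le> x \<Longrightarrow> x < SS k t (Suc j) \<Longrightarrow> lev k t x = j"
  unfolding lev_def
proof (rule Max_eqI)
  show "finite {j. j \<le> k \<and> SS k t j \<le> x}" by simp
  fix i assume "i \<in> {j. j \<le> k \<and> SS k t j \<le> x}" and "x < SS k t (Suc j)"
  then show "i \<le> j" using SS_mono[of "Suc j" i] by (cases "i \<le> j") auto
qed auto

lemma level_exists: "x < SS k t m \<Longrightarrow> \<exists>j<m. SS k t j \<le> x \<and> x < SS k t (Suc j)"
proof (induction m)
  case 0 then show ?case by simp
next
  case (Suc m)
  show ?case
  proof (cases "x < SS k t m")
    case True then show ?thesis using Suc.IH by (meson less_SucI)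
  next
    case False then show ?thesis using Suc.prems by (intro exI[of _ m]) auto
  qed
qed

lemma lev_spec: "x < TT k t \<Longrightarrow> lev k t x \<le> k \<and> SS k t (lev k t x) \<le> x \<and> x < SS k t (Suc (lev k t x))"
proof -
  assume "x < TT k t"
  then obtain j where "j < Suc k" "SS k t j \<le> x" "x < SS k t (Suc j)"
    using level_exists unfolding TT_def by blast
  then show ?thesis using lev_eq[of j x] by auto
qed

lemma TT_ge: "j \<le> k \<Longrightarrow> SS k t (Suc j) \<le> TT k t"
  unfolding TT_def by (rule SS_mono) simp

lemma FF_ge: "x \<ge> TT k t \<Longrightarrow> FF k t x = x" by (simp add: FF_def)

lemma lev0: "lev k t 0 = 0" using lev_eq[of 0 0] by simp

lemma TT_pos: "0 < TT k t" using TT_ge[of 0] by simp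

lemma FF0: "FF k t 0 = 0" using TT_pos by (simp add: FF_def lev0)

lemma FF_level: assumes "x < TT k t" "lev k t x = Suc i"
  shows "SS k t i \<le> FF k t x \<and> FF k t x < SS k t (Suc i) \<and>
         FF k t x = SS k t i + (x - SS k t (Suc i)) div bb k t (Suc i)"
proof -
  have s: "Suc i \<le> k" "SS k t (Suc i) \<le> x" "x < SS k t (Suc (Suc i))"
    using lev_spec[OF assms(1)] assms(2) by auto
  have eq: "FF k t x = SS k t i + (x - SS k t (Suc i)) div bb k t (Suc i)"
    using assms by (simp add: FF_def)
  have "x - SS k t (Suc i) < aa k t (Suc i)" using s SS_Suc[of "Suc i"] by simp
  also have "\<dots> = aa k t i * bb k t (Suc i)" using aa_Suc s(1) by simp
  finally have "(x - SS k t (Suc i)) div bb k t (Suc i) < aa k t i"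
    by (simp add: less_mult_imp_div_less)
  then show ?thesis using eq SS_Suc[of i] by simp
qed

lemma FF_lt: assumes "x < SS k t (Suc (Suc j))" "j < k" shows "FF k t x < SS k t (Suc j)"
proof -
  have xT: "x < TT k t" using assms TT_ge[of "Suc j"] by simp
  from lev_spec[OF xT] have "lev k t x \<le> Suc j"
    using assms(1) SS_mono[of "Suc (Suc j)" "lev k t x"] by (cases "lev k t x \<le> Suc j") auto
  then show ?thesis
  proof (cases "lev k t x")
    case 0 then have "x = 0" using lev_spec[OF xT] by simp
    then show ?thesis using FF0 SS_strict[of 0 "Suc j"] by simp
  next
    case (Suc i)
    then show ?thesis using FF_level[OF xT Suc] SS_mono[of "Suc i" "Suc j"] \<open>lev k t x \<le> Suc j\<close> by simp
  qed
qed

lemma FF_le: "FF k t x \<le> x"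
proof (cases "x < TT k t")
  case True
  show ?thesis
  proof (cases "lev k t x")
    case 0 then have "x = 0" using lev_spec[OF True] by simp
    then show ?thesis using FF0 by simp
  next
    case (Suc i) then show ?thesis using FF_level[OF True Suc] lev_spec[OF True] by simp
  qed
qed (simp add: FF_def)

lemma FFpow_tree: "j \<le> k \<Longrightarrow> x < SS k t (Suc j) \<Longrightarrow> (FF k t ^^ j) x = 0"
proof (induction j arbitrary: x)
  case 0 then show ?case by simp
next
  case (Suc j)
  have "FF k t x < SS k t (Suc j)" using FF_lt Suc.prems by simp
  then show ?case using Suc by (simp add: funpow_Suc_right del: funpow.simps)
qed

lemma FFpow_out: "x \<ge> TT k t \<Longrightarrow> (FF k t ^^ j) x = x"
  by (induction j) (auto simp: FF_ge)

lemma fib_lvl: assumes j: "j < k" and y: "SS k t j \<le> y" "y < SS k t (Suc j)" and n: "TT k t \<le> n"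
  shows "{x\<in>{0..<n}. FF k t x = y} =
     {SS k t (Suc j) + (y - SS k t j) * bb k t (Suc j) ..< SS k t (Suc j) + Suc (y - SS k t j) * bb k t (Suc j)}
      \<union> (if j = 0 then {0} else {})" (is "?L = ?R")
proof
  define B where "B = bb k t (Suc j)"
  define d where "d = y - SS k t j"
  have B0: "B > 0" using bb_pos[of "Suc j"] unfolding B_def by simp
  show "?L \<subseteq> ?R"
  proof
    fix x assume "x \<in> ?L"
    then have xn: "x < n" and fx: "FF k t x = y" by auto
    have xT: "x < TT k t"
    proof (rule ccontr)
      assume "\<not> x < TT k t"
      then have "FF k t x = x" "x \<ge> TT k t" by (auto simp: FF_ge)
      then show False using fx y TT_ge[of j] j by simp
    qed
    show "x \<in> ?R"
    proof (cases "lev k t x")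
      case 0
      then have "x = 0" using lev_spec[OF xT] by simp
      then have "y = 0" using fx FF0 by simp
      then have "j = 0" using y SS_strict[of 0 j] by (cases "j = 0") auto
      then show ?thesis using \<open>x = 0\<close> by simp
    next
      case (Suc i)
      note L = FF_level[OF xT Suc]
      have ik: "Suc i \<le> k" using lev_spec[OF xT] Suc by simp
      have "lev k t y = i" using L fx lev_eq[of i y] ik by simp
      moreover have "lev k t y = j" using lev_eq[of j y] y j by simp
      ultimately have ij: "i = j" by simp
      have q: "(x - SS k t (Suc j)) div B = d" using L fx ij y unfolding B_def d_def by simp
      have m1: "(x - SS k t (Suc j)) div B * B + (x - SS k t (Suc j)) mod B = x - SS k t (Suc j)"
        by (rule div_mult_mod_eq)
      have m2: "(x - SS k t (Suc j)) mod B < B" using B0 by simp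
      have "d * B \<le> x - SS k t (Suc j)" using m1 unfolding q by linarith
      moreover have "x - SS k t (Suc j) < Suc d * B" using m1 m2 q by simp
      moreover have "SS k t (Suc j) \<le> x" using lev_spec[OF xT] Suc ij by simp
      ultimately show ?thesis unfolding B_def d_def by auto
    qed
  qed
  show "?R \<subseteq> ?L"
  proof
    fix x assume xR: "x \<in> ?R"
    show "x \<in> ?L"
    proof (cases "x = 0")
      case True
      then have "j = 0"
        using xR SS_strict[of 0 "Suc j"] by (cases "j = 0") auto
      then have "y = 0" using y by simp
      then show ?thesis using True FF0 TT_pos n by simp
    next
      case False
      then have x1: "SS k t (Suc j) + d * B \<le> x" "x < SS k t (Suc j) + Suc d * B"
        using xR unfolding B_def d_def by (auto split: if_splits)
      have "Suc d \<le> aa k t j" using y SS_Suc[of j] unfolding d_def by simp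
      then have "Suc d * B \<le> aa k t j * B" by (rule mult_le_mono1)
      also have "aa k t j * B = aa k t (Suc j)" using aa_Suc[OF j] B_def by simp
      finally have "Suc d * B \<le> aa k t (Suc j)" .
      then have x2: "x < SS k t (Suc (Suc j))" using x1 SS_Suc[of "Suc j"] by simp
      have xT: "x < TT k t" using x2 TT_ge[of "Suc j"] j by simp
      have lv: "lev k t x = Suc j" using lev_eq[of "Suc j" x] x1 x2 j by simp
      have "(x - SS k t (Suc j)) div B = d"
        by (rule div_nat_eqI) (use x1 in \<open>auto simp: mult.commute\<close>)
      then have "FF k t x = y" using FF_level[OF xT lv] y unfolding B_def d_def by simp
      then show ?thesis using xT n by simp
    qed
  qed
qed

lemma card_fib_lvl: assumes "j < k" "SS k t j \<le> y" "y < SS k t (Suc j)" "TT k t \<le> n"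
  shows "card {x\<in>{0..<n}. FF k t x = y} = bb k t (Suc j) + (if j = 0 then 1 else 0)"
proof -
  have d: "0 \<notin> {SS k t (Suc j) + (y - SS k t j) * bb k t (Suc j) ..< SS k t (Suc j) + Suc (y - SS k t j) * bb k t (Suc j)}"
    using SS_strict[of 0 "Suc j"] by simp
  show ?thesis unfolding fib_lvl[OF assms] using d by (auto simp: card_insert_if)
qed

lemma fib_top: assumes "SS k t k \<le> y" "y < TT k t"
  shows "{x\<in>{0..<n}. FF k t x = y} = {}"
proof (rule ccontr)
  assume "\<not> ?thesis"
  then obtain x where fx: "FF k t x = y" by auto
  have xT: "x < TT k t"
  proof (rule ccontr)
    assume "\<not> x < TT k t"
    then show False using fx assms by (simp add: FF_ge)
  qed
  show False
  proof (cases "lev k t x")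
    case 0
    then have "x = 0" using lev_spec[OF xT] by simp
    then show False using fx FF0 assms SS_strict[of 0 k] k2 by simp
  next
    case (Suc i)
    then show False using FF_level[OF xT Suc] lev_spec[OF xT] fx assms SS_mono[of "Suc i" k] by simp
  qed
qed

lemma fib_out: assumes "TT k t \<le> y" "y < n"
  shows "{x\<in>{0..<n}. FF k t x = y} = {y}"
proof -
  have "FF k t x = y \<longleftrightarrow> x = y" for x
  proof
    assume fx: "FF k t x = y"
    show "x = y"
    proof (cases "x < TT k t")
      case True
      then show ?thesis using FF_le[of x] fx assms by simp
    qed (use fx in \<open>simp add: FF_ge\<close>)
  qed (use assms in \<open>simp add: FF_ge\<close>)
  then show ?thesis using assms by auto
qed

lemma sum_levels: "(\<Sum>y\<in>{0..<SS k t m}. g y) = (\<Sum>j<m. \<Sum>y\<in>{SS k t j..<SS k t (Suc j)}. g y)"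
proof (induction m)
  case 0 then show ?case by simp
next
  case (Suc m)
  have "(\<Sum>y\<in>{0..<SS k t (Suc m)}. g y) = (\<Sum>y\<in>{0..<SS k t m}. g y) + (\<Sum>y\<in>{SS k t m..<SS k t (Suc m)}. g y)"
    using sum.atLeastLessThan_concat[of 0 "SS k t m" "SS k t (Suc m)" g] SS_mono[of m "Suc m"] by simp
  then show ?case using Suc by simp
qed

lemma sum_split_n: assumes "TT k t \<le> n"
  shows "(\<Sum>y\<in>{0..<n}. g y) = (\<Sum>y\<in>{0..<TT k t}. g y) + (\<Sum>y\<in>{TT k t..<n}. g y)"
  using sum.atLeastLessThan_concat[of 0 "TT k t" n g] assms by simp

lemma bb1_sq: "bb k t 1 ^ 2 = t ^ 2 ^ k"
proof -
  have "(2::nat) ^ k = 2 ^ (k - 1) * 2" using k2 by (metis Suc_diff_1 less_le_trans pos2 power_Suc2 zero_less_Suc)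
  then show ?thesis by (simp add: bb_def power_mult)
qed

lemma level_sq: assumes "j < k" "j \<ge> 1" shows "aa k t j * bb k t (Suc j) ^ 2 = t ^ 2 ^ k"
proof -
  have "aa k t j * bb k t (Suc j) ^ 2 = aa k t (Suc j) * bb k t (Suc j)"
    using aa_Suc[OF assms(1)] by (simp add: power2_eq_square)
  also have "\<dots> = t ^ (2^k - 2^(k - Suc j) + 2^(k - Suc j))" by (simp only: aa_def bb_def power_add)
  also have "2^k - 2^(k - Suc j) + 2^(k - Suc j) = (2::nat)^k"
    using power_increasing[of "k - Suc j" k "2::nat"] by simp
  finally show ?thesis .
qed

lemma deg1_sum: assumes n: "TT k t \<le> n"
  shows "(\<Sum>y\<in>{0..<n}. card {x\<in>{0..<n}. FF k t x = y} ^ 2) = k * t ^ 2 ^ k + 2 * bb k t 1 + 1 + (n - TT k t)"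
proof -
  let ?c = "\<lambda>y. card {x\<in>{0..<n}. FF k t x = y} ^ 2"
  have out: "(\<Sum>y\<in>{TT k t..<n}. ?c y) = n - TT k t" using fib_out by simp
  have lvl: "(\<Sum>y\<in>{SS k t j..<SS k t (Suc j)}. ?c y) = aa k t j * (bb k t (Suc j) + (if j = 0 then 1 else 0))^2"
    if "j < k" for j
  proof -
    have "(\<Sum>y\<in>{SS k t j..<SS k t (Suc j)}. ?c y) = (\<Sum>y\<in>{SS k t j..<SS k t (Suc j)}. (bb k t (Suc j) + (if j = 0 then 1 else 0))^2)"
      by (rule sum.cong) (use card_fib_lvl that n in auto)
    then show ?thesis using SS_Suc[of j] by simp
  qed
  have top: "(\<Sum>y\<in>{SS k t k..<SS k t (Suc k)}. ?c y) = 0"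
    using fib_top unfolding TT_def by simp
  have "(\<Sum>y\<in>{0..<TT k t}. ?c y) = (\<Sum>j<k. \<Sum>y\<in>{SS k t j..<SS k t (Suc j)}. ?c y)"
    unfolding TT_def sum_levels using top by simp
  also have "\<dots> = (\<Sum>j<k. aa k t j * (bb k t (Suc j) + (if j = 0 then 1 else 0))^2)"
    using lvl by simp
  also have "\<dots> = (bb k t 1 + 1)^2 + (k - 1) * t ^ 2 ^ k"
  proof -
    obtain k' where k': "k = Suc k'" using k2 by (cases k) auto
    have "(\<Sum>j<k. aa k t j * (bb k t (Suc j) + (if j = 0 then 1 else 0))^2)
       = aa k t 0 * (bb k t 1 + 1)^2 + (\<Sum>j<k'. aa k t (Suc j) * bb k t (Suc (Suc j))^2)"
      unfolding k' sum.lessThan_Suc_shift by simp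
    also have "(\<Sum>j<k'. aa k t (Suc j) * bb k t (Suc (Suc j))^2) = (\<Sum>j<k'. t ^ 2 ^ k)"
      by (rule sum.cong) (use level_sq k' in auto)
    finally show ?thesis using k' by (simp add: aa_def)
  qed
  also have "\<dots> = k * t ^ 2 ^ k + 2 * bb k t 1 + 1"
    using arith_aux[of k "bb k t 1"] k2 bb1_sq by simp
  finally show ?thesis unfolding sum_split_n[OF n] out by simp
qed

lemma degk_sum: assumes n: "TT k t \<le> n"
  shows "(\<Sum>y\<in>{0..<n}. card {x\<in>{0..<n}. (FF k t ^^ k) x = y} ^ 2) = TT k t ^ 2 + (n - TT k t)"
proof -
  let ?c = "\<lambda>y. card {x\<in>{0..<n}. (FF k t ^^ k) x = y} ^ 2"
  have P: "(FF k t ^^ k) x = (if x < TT k t then 0 else x)" for x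
    using FFpow_tree[of k x] FFpow_out[of x k] unfolding TT_def by auto
  have out: "(\<Sum>y\<in>{TT k t..<n}. ?c y) = n - TT k t"
  proof -
    have "{x\<in>{0..<n}. (FF k t ^^ k) x = y} = {y}" if "y \<in> {TT k t..<n}" for y
      using that TT_pos by (auto simp: P)
    then show ?thesis by simp
  qed
  have z: "{x\<in>{0..<n}. (FF k t ^^ k) x = 0} = {0..<TT k t}" using n TT_pos by (auto simp: P)
  have e: "{x\<in>{0..<n}. (FF k t ^^ k) x = y} = {}" if "0 < y" "y < TT k t" for y
    using that by (auto simp: P)
  have "(\<Sum>y\<in>{0..<TT k t}. ?c y) = ?c 0 + (\<Sum>y\<in>{Suc 0..<TT k t}. ?c y)"
    using TT_pos by (simp add: sum.atLeast_Suc_lessThan)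
  also have "(\<Sum>y\<in>{Suc 0..<TT k t}. ?c y) = 0" using e by simp
  finally show ?thesis unfolding sum_split_n[OF n] out z by simp
qed

lemma TT_split: "TT k t = t ^ (2^k - 1) + SS k t k"
  unfolding TT_def using SS_Suc[of k] by (simp add: aa_def)

lemma SSk_bound: "SS k t k \<le> k * t ^ (2^k - 2)"
proof -
  have "aa k t i \<le> t ^ (2^k - 2)" if "i < k" for i
  proof -
    have "(2::nat) ^ 1 \<le> 2 ^ (k - i)" using that by (intro power_increasing) auto
    then have "2^k - 2^(k-i) \<le> (2::nat)^k - 2" by simp
    then show ?thesis unfolding aa_def using t1 by (intro power_increasing) auto
  qed
  then have "SS k t k \<le> (\<Sum>i<k. t ^ (2^k - 2))" unfolding SS_def by (intro sum_mono) auto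
  then show ?thesis by simp
qed

lemma bb1_le: "bb k t 1 \<le> TT k t"
proof -
  have "aa k t 1 \<le> SS k t (Suc k)" unfolding SS_def
    by (rule member_le_sum) (use k2 in auto)
  moreover have "aa k t 1 = bb k t 1" unfolding aa_def bb_def
    using k2 by (metis Suc_diff_1 One_nat_def diff_Suc_1 less_le_trans pos2 power_Suc mult_2 add_diff_cancel_left' zero_less_Suc)
  ultimately show ?thesis unfolding TT_def by simp
qed

lemma TT_le: "TT k t \<le> (k+1) * t ^ (2^k - 1)"
proof -
  have "t ^ (2^k - 2) \<le> t ^ (2^k - 1)" using t1 by (intro power_increasing) auto
  then have h: "k * t ^ (2^k - 2) \<le> k * t ^ (2^k - 1)" by (rule mult_le_mono2)
  have "TT k t \<le> t ^ (2^k - 1) + k * t ^ (2^k - 1)" using TT_split SSk_bound h by linarith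
  then show ?thesis by simp
qed

end

lemma root_at_top: assumes "M > 0"
  shows "filterlim (\<lambda>n::nat. real n powr (1 / real M)) at_top sequentially"
  unfolding filterlim_at_top
proof
  fix Z :: real
  define z where "z = max Z 1"
  have z1: "z \<ge> 1" unfolding z_def by simp
  have "eventually (\<lambda>n::nat. real n \<ge> z ^ M) sequentially"
    by (rule eventually_sequentiallyI[of "nat \<lceil>z ^ M\<rceil>"]) (use real_nat_ceiling_ge in \<open>force\<close>)
  then show "eventually (\<lambda>n::nat. Z \<le> real n powr (1 / real M)) sequentially"
  proof (rule eventually_mono)
    fix n :: nat assume n: "real n \<ge> z ^ M"
    have "z = (z ^ M) powr (1 / real M)"
      using z1 assms by (simp add: powr_realpow[symmetric] powr_powr)
    also have "\<dots> \<le> real n powr (1 / real M)" using n z1 by (intro powr_mono2) auto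
    finally show "Z \<le> real n powr (1 / real M)" unfolding z_def by simp
  qed
qed

lemma squeeze0: fixes g r :: "nat \<Rightarrow> real"
  assumes "filterlim r at_top sequentially" "eventually (\<lambda>n. 0 \<le> g n \<and> g n \<le> c / r n) sequentially"
  shows "g \<longlonglongrightarrow> 0"
proof (rule tendsto_sandwich[of "\<lambda>_. 0" g sequentially "\<lambda>n. c / r n"])
  show "eventually (\<lambda>n. 0 \<le> g n) sequentially" "eventually (\<lambda>n. g n \<le> c / r n) sequentially"
    using assms(2) by (auto elim: eventually_mono)
  show "(\<lambda>n. c / r n) \<longlonglongrightarrow> 0"
    using assms(1) by (intro tendsto_divide_0[OF tendsto_const]) (rule filterlim_at_top_imp_at_infinity)
qed simp

lemma ratio1: fixes t r :: "nat \<Rightarrow> real"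
  assumes "filterlim r at_top sequentially" "eventually (\<lambda>n. 1 \<le> r n \<and> t n \<le> r n \<and> r n < t n + 1) sequentially"
  shows "(\<lambda>n. t n / r n) \<longlonglongrightarrow> 1"
proof -
  have "(\<lambda>n. 1 - t n / r n) \<longlonglongrightarrow> 0"
  proof (rule squeeze0[OF assms(1), of _ 1])
    show "eventually (\<lambda>n. 0 \<le> 1 - t n / r n \<and> 1 - t n / r n \<le> 1 / r n) sequentially"
      using assms(2)
    proof eventually_elim
      case (elim n)
      then have e: "1 - t n / r n = (r n - t n) / r n" by (simp add: field_simps)
      have "(r n - t n) / r n \<le> 1 / r n" using elim by (intro divide_right_mono) auto
      moreover have "0 \<le> (r n - t n) / r n" using elim by auto
      ultimately show ?case unfolding e by simp
    qed
  qed
  then have "(\<lambda>n. 1 - (1 - t n / r n)) \<longlonglongrightarrow> 1 - 0" by (intro tendsto_diff tendsto_const)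
  then show ?thesis by simp
qed

lemma div_bound: fixes r T c :: real
  assumes "0 < r" "T \<le> c * r ^ m" shows "T / r ^ Suc m \<le> c / r"
proof -
  have "T / r ^ m \<le> c" using assms by (simp add: pos_divide_le_eq)
  then have "(T / r ^ m) / r \<le> c / r" using assms(1) by (intro divide_right_mono) auto
  then show ?thesis by (metis divide_divide_eq_left power_Suc2)
qed

lemma alg1: fixes nn rr tt B T K :: real
  assumes "nn = rr ^ M" "rr > 0"
  shows "(K * tt ^ M + 2 * B + 1 + nn - T) / nn = K * (tt / rr) ^ M + (2 * B + 1) / nn + 1 - T / nn"
proof -
  have "nn > 0" using assms by simp
  then show ?thesis using assms by (simp add: power_divide field_simps)
qed

lemma alg2: fixes nn rr tt S T :: real
  assumes "nn = rr ^ Suc (Suc m)" "rr > 0" "T = tt ^ Suc m + S"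
  shows "((T ^ 2 + nn - T) / nn) / rr ^ m = ((tt / rr) ^ Suc m + S / rr ^ Suc m) ^ 2 + (nn - T) / (nn * rr ^ m)"
proof -
  have e1: "nn * rr ^ m = (rr ^ Suc m) ^ 2" using assms(1)
    by (simp add: power2_eq_square power_add[symmetric] algebra_simps)
  have e2: "T / rr ^ Suc m = (tt / rr) ^ Suc m + S / rr ^ Suc m"
    using assms(3) by (simp add: add_divide_distrib power_divide)
  have "((T ^ 2 + nn - T) / nn) / rr ^ m = T ^ 2 / (nn * rr ^ m) + (nn - T) / (nn * rr ^ m)"
    by (simp add: divide_divide_eq_left add_divide_distrib diff_divide_distrib)
  also have "T ^ 2 / (nn * rr ^ m) = (T / rr ^ Suc m) ^ 2" unfolding e1 by (simp add: power_divide)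
  finally show ?thesis unfolding e2 .
qed

theorem mainTheorem3:
  fixes k :: nat
  assumes "k \<ge> 2"
  shows "\<exists>(X :: nat \<Rightarrow> nat set) (f :: nat \<Rightarrow> nat \<Rightarrow> nat).
           (\<forall>n\<ge>1. finite (X n) \<and> card (X n) = n \<and> f n ` X n \<subseteq> X n) \<and>
           ((\<lambda>n. fdeg (X n) (X n) (f n)) \<longlonglongrightarrow> real k + 1) \<and>
           ((\<lambda>n. fdeg (X n) (X n) (f n ^^ k) / real n powr (1 - 1 / 2 ^ (k - 1)))
              \<longlonglongrightarrow> 1)"
proof -
  define M where "M = (2::nat) ^ k"
  define m where "m = M - 2"
  have M4: "M \<ge> 4" unfolding M_def using power_increasing[OF assms, of "2::nat"] by simp
  have Mm: "M = Suc (Suc m)" using M4 unfolding m_def by simp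
  define r where "r n = real n powr (1 / real M)" for n
  define t where "t n = nat \<lfloor>r n\<rfloor>" for n
  define f where "f n x = (if 1 \<le> t n then FF k (t n) x else x)" for n x
  have rinf: "filterlim r at_top sequentially"
    unfolding r_def[abs_def] by (rule root_at_top) (use M4 in simp)
  have basic: "r n \<ge> 1 \<and> r n ^ M = real n \<and> real (t n) \<le> r n \<and> r n < real (t n) + 1" if "n \<ge> 1" for n
  proof -
    have r1: "r n \<ge> 1" unfolding r_def using that by (intro ge_one_powr_ge_zero) auto
    have "r n ^ M = r n powr real M" using r1 by (simp add: powr_realpow)
    also have "\<dots> = real n" unfolding r_def using M4 that by (simp add: powr_powr)
    finally have "r n ^ M = real n" .
    moreover have "real (t n) = of_int \<lfloor>r n\<rfloor>" unfolding t_def using r1 by simp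
    ultimately show ?thesis using r1 by linarith
  qed
  have ev: "eventually (\<lambda>n. n \<ge> 1 \<and> t n \<ge> k + 1) sequentially"
  proof -
    have "eventually (\<lambda>n. r n \<ge> real (k + 1)) sequentially"
      using rinf unfolding filterlim_at_top by blast
    moreover have "eventually (\<lambda>n. n \<ge> (1::nat)) sequentially" by (rule eventually_ge_at_top)
    ultimately show ?thesis
    proof eventually_elim
      case (elim n)
      then have "real (k+1) < real (t n) + 1" using basic[of n] by linarith
      then show ?case using elim by simp
    qed
  qed
  have facts: "TT k (t n) \<le> n" if "n \<ge> 1" "t n \<ge> k + 1" for n
  proof -
    have t1: "t n \<ge> 1" using that by simp
    have "TT k (t n) \<le> (k+1) * t n ^ (M - 1)" using TT_le[OF assms t1] unfolding M_def .
    also have "\<dots> \<le> t n * t n ^ (M - 1)" using that by (intro mult_le_mono1) auto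
    also have "\<dots> = t n ^ M" using Mm by simp
    finally have a: "TT k (t n) \<le> t n ^ M" .
    have "real (t n) ^ M \<le> r n ^ M" by (rule power_mono) (use basic[OF that(1)] in auto)
    then have "real (t n ^ M) \<le> real n" using basic[OF that(1)] by simp
    then have "t n ^ M \<le> n" by (simp only: of_nat_le_iff)
    then show ?thesis using a by simp
  qed
  show ?thesis
  proof (intro exI[of _ "\<lambda>n. {0..<n}"] exI[of _ f] conjI allI impI)
    fix n :: nat assume "n \<ge> 1"
    show "finite {0..<n}" "card {0..<n} = n" by auto
    show "f n ` {0..<n} \<subseteq> {0..<n}"
      using FF_le[OF assms] by (auto simp: f_def) (meson le_less_trans)
  next
    have ratio: "(\<lambda>n. real (t n) / r n) \<longlonglongrightarrow> 1"
      by (rule ratio1[OF rinf]) (use ev basic in \<open>auto elim: eventually_mono\<close>)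
    have Tb: "real (TT k (t n)) \<le> real (k+1) * r n ^ (M - 1)" if "n \<ge> 1" "t n \<ge> k + 1" for n
    proof -
      have t1: "t n \<ge> 1" using that by simp
      have "real (TT k (t n)) \<le> real ((k+1) * t n ^ (M - 1))"
        using TT_le[OF assms t1] unfolding M_def by (simp only: of_nat_le_iff)
      also have "\<dots> = real (k+1) * real (t n) ^ (M - 1)" by (simp only: of_nat_mult of_nat_power)
      also have "\<dots> \<le> real (k+1) * r n ^ (M - 1)"
        by (intro mult_left_mono power_mono) (use basic[OF that(1)] in auto)
      finally show ?thesis .
    qed
    have T0: "(\<lambda>n. real (TT k (t n)) / real n) \<longlonglongrightarrow> 0"
    proof (rule squeeze0[OF rinf, of _ "real (k+1)"])
      show "eventually (\<lambda>n. 0 \<le> real (TT k (t n)) / real n \<and> real (TT k (t n)) / real n \<le> real (k+1) / r n) sequentially"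
        using ev
      proof eventually_elim
        case (elim n)
        have "real (TT k (t n)) / r n ^ Suc (M - 1) \<le> real (k+1) / r n"
          using Tb[of n] elim basic[of n] by (intro div_bound) auto
        moreover have "r n ^ Suc (M - 1) = real n" using basic[of n] elim Mm by simp
        ultimately show ?case by simp
      qed
    qed
    have B0: "(\<lambda>n. (2 * real (bb k (t n) 1) + 1) / real n) \<longlonglongrightarrow> 0"
    proof (rule squeeze0[OF rinf, of _ "3 * real (k+1)"])
      show "eventually (\<lambda>n. 0 \<le> (2 * real (bb k (t n) 1) + 1) / real n \<and> (2 * real (bb k (t n) 1) + 1) / real n \<le> 3 * real (k+1) / r n) sequentially"
        using ev
      proof eventually_elim
        case (elim n)
        have t1: "t n \<ge> 1" using elim by simp
        have "bb k (t n) 1 \<le> TT k (t n)" "1 \<le> TT k (t n)" using bb1_le[OF assms t1] TT_pos[OF assms t1] by auto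
        then have "2 * real (bb k (t n) 1) + 1 \<le> 3 * real (TT k (t n))" by simp
        also have "\<dots> \<le> (3 * real (k+1)) * r n ^ (M - 1)" using Tb[of n] elim by (simp add: algebra_simps)
        finally have "(2 * real (bb k (t n) 1) + 1) / r n ^ Suc (M - 1) \<le> 3 * real (k+1) / r n"
          using elim basic[of n] by (intro div_bound) auto
        moreover have "r n ^ Suc (M - 1) = real n" using basic[of n] elim Mm by simp
        ultimately show ?case by simp
      qed
    qed
    have lim: "(\<lambda>n. real k * (real (t n) / r n) ^ M + (2 * real (bb k (t n) 1) + 1) / real n + 1 - real (TT k (t n)) / real n)
         \<longlonglongrightarrow> real k * 1 ^ M + 0 + 1 - 0"
      by (intro tendsto_intros ratio B0 T0)
    have lk: "real k * 1 ^ M + 0 + 1 - 0 = real k + 1" by simp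
    show "(\<lambda>n. fdeg {0..<n} {0..<n} (f n)) \<longlonglongrightarrow> real k + 1"
    proof (rule Lim_transform_eventually[OF lim[unfolded lk]])
      show "eventually (\<lambda>n. real k * (real (t n) / r n) ^ M + (2 * real (bb k (t n) 1) + 1) / real n + 1 - real (TT k (t n)) / real n
         = fdeg {0..<n} {0..<n} (f n)) sequentially"
        using ev
      proof eventually_elim
        case (elim n)
        have t1: "t n \<ge> 1" using elim by simp
        have fn: "f n = FF k (t n)" using t1 by (auto simp: f_def)
        have TTn: "TT k (t n) \<le> n" using facts elim by simp
        have "fdeg {0..<n} {0..<n} (f n) = real (\<Sum>y\<in>{0..<n}. card {x\<in>{0..<n}. FF k (t n) x = y} ^ 2) / real n"
          unfolding fdeg_def fn by simp
        also have "\<dots> = real (k * t n ^ 2 ^ k + 2 * bb k (t n) 1 + 1 + (n - TT k (t n))) / real n"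
          using deg1_sum[OF assms t1 TTn] by simp
        also have "\<dots> = (real k * real (t n) ^ M + 2 * real (bb k (t n) 1) + 1 + real n - real (TT k (t n))) / real n"
          using TTn unfolding M_def by (simp add: of_nat_diff)
        also have "\<dots> = real k * (real (t n) / r n) ^ M + (2 * real (bb k (t n) 1) + 1) / real n + 1 - real (TT k (t n)) / real n"
          by (rule alg1) (use basic[of n] elim in auto)
        finally show ?case by simp
      qed
    qed
  next
    have ratio: "(\<lambda>n. real (t n) / r n) \<longlonglongrightarrow> 1"
      by (rule ratio1[OF rinf]) (use ev basic in \<open>auto elim: eventually_mono\<close>)
    have Mr: "real M = 2 * 2 ^ (k - 1)" unfolding M_def using assms
      by (cases k) auto
    have mr: "real m = real M - 2" unfolding m_def using M4 by simp
    have npow: "real n powr (1 - 1 / 2 ^ (k - 1)) = r n ^ m" if "n \<ge> 1" for n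
    proof -
      have "r n ^ m = r n powr real m" using basic[OF that] by (simp add: powr_realpow)
      also have "\<dots> = real n powr (1 / real M * real m)" unfolding r_def by (simp add: powr_powr)
      also have "1 / real M * real m = 1 - 1 / 2 ^ (k - 1)" unfolding mr Mr by (simp add: field_simps)
      finally show ?thesis by simp
    qed
    have S0: "(\<lambda>n. real (SS k (t n) k) / r n ^ Suc m) \<longlonglongrightarrow> 0"
    proof (rule squeeze0[OF rinf, of _ "real k"])
      show "eventually (\<lambda>n. 0 \<le> real (SS k (t n) k) / r n ^ Suc m \<and> real (SS k (t n) k) / r n ^ Suc m \<le> real k / r n) sequentially"
        using ev
      proof eventually_elim
        case (elim n)
        have t1: "t n \<ge> 1" using elim by simp
        have "real (SS k (t n) k) \<le> real (k * t n ^ m)"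
          using SSk_bound[OF assms t1] unfolding m_def M_def by (simp only: of_nat_le_iff)
        also have "\<dots> = real k * real (t n) ^ m" by (simp only: of_nat_mult of_nat_power)
        also have "\<dots> \<le> real k * r n ^ m"
          by (intro mult_left_mono power_mono) (use basic[of n] elim in auto)
        finally have "real (SS k (t n) k) / r n ^ Suc m \<le> real k / r n"
          using elim basic[of n] by (intro div_bound) auto
        moreover have "0 \<le> real (SS k (t n) k) / r n ^ Suc m" using basic[of n] elim by simp
        ultimately show ?case by simp
      qed
    qed
    have R0: "(\<lambda>n. (real n - real (TT k (t n))) / (real n * r n ^ m)) \<longlonglongrightarrow> 0"
    proof (rule squeeze0[OF rinf, of _ 1])
      show "eventually (\<lambda>n. 0 \<le> (real n - real (TT k (t n))) / (real n * r n ^ m) \<and> (real n - real (TT k (t n))) / (real n * r n ^ m) \<le> 1 / r n) sequentially"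
        using ev
      proof eventually_elim
        case (elim n)
        have TTn: "TT k (t n) \<le> n" using facts elim by simp
        have r1: "r n \<ge> 1" using basic[of n] elim by simp
        have n0: "real n > 0" using elim by simp
        have "(real n - real (TT k (t n))) / (real n * r n ^ m) \<le> real n / (real n * r n ^ m)"
          using r1 n0 by (intro divide_right_mono) auto
        also have "\<dots> = 1 / r n ^ m" using n0 by simp
        also have "\<dots> \<le> 1 / r n"
        proof (rule divide_left_mono)
          have "r n ^ 1 \<le> r n ^ m" using r1 M4 unfolding m_def by (intro power_increasing) auto
          then show "r n \<le> r n ^ m" by simp
        qed (use r1 in auto)
        finally show ?case using TTn n0 r1 by simp
      qed
    qed
    have lim: "(\<lambda>n. ((real (t n) / r n) ^ Suc m + real (SS k (t n) k) / r n ^ Suc m) ^ 2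
          + (real n - real (TT k (t n))) / (real n * r n ^ m)) \<longlonglongrightarrow> (1 ^ Suc m + 0) ^ 2 + 0"
      by (intro tendsto_intros ratio S0 R0)
    have l1: "(1 ^ Suc m + 0) ^ 2 + 0 = (1::real)" by simp
    show "(\<lambda>n. fdeg {0..<n} {0..<n} (f n ^^ k) / real n powr (1 - 1 / 2 ^ (k - 1))) \<longlonglongrightarrow> 1"
    proof (rule Lim_transform_eventually[OF lim[unfolded l1]])
      show "eventually (\<lambda>n. ((real (t n) / r n) ^ Suc m + real (SS k (t n) k) / r n ^ Suc m) ^ 2
          + (real n - real (TT k (t n))) / (real n * r n ^ m) = fdeg {0..<n} {0..<n} (f n ^^ k) / real n powr (1 - 1 / 2 ^ (k - 1))) sequentially"
        using ev
      proof eventually_elim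
        case (elim n)
        have t1: "t n \<ge> 1" using elim by simp
        have fn: "f n = FF k (t n)" using t1 by (auto simp: f_def)
        have TTn: "TT k (t n) \<le> n" using facts elim by simp
        have "fdeg {0..<n} {0..<n} (f n ^^ k) = real (\<Sum>y\<in>{0..<n}. card {x\<in>{0..<n}. (FF k (t n) ^^ k) x = y} ^ 2) / real n"
          unfolding fdeg_def fn by simp
        also have "\<dots> = real (TT k (t n) ^ 2 + (n - TT k (t n))) / real n"
          using degk_sum[OF assms t1 TTn] by simp
        also have "\<dots> = (real (TT k (t n)) ^ 2 + real n - real (TT k (t n))) / real n"
          using TTn by (simp add: of_nat_diff)
        finally have e: "fdeg {0..<n} {0..<n} (f n ^^ k) / real n powr (1 - 1 / 2 ^ (k - 1))
            = ((real (TT k (t n)) ^ 2 + real n - real (TT k (t n))) / real n) / r n ^ m"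
          using npow[of n] elim by simp
        have "real (TT k (t n)) = real (t n) ^ Suc m + real (SS k (t n) k)"
          using TT_split[OF assms t1] Mm unfolding M_def by simp
        then show ?case unfolding e
          by (intro alg2[symmetric]) (use basic[of n] elim Mm in auto)
      qed
    qed
  qed
qed

end
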